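(* Let $q$ be a meromorphic quadratic differential on $\mathbb{P}^1$ with exactly four poles, all double poles, each of residue $1$, and holomorphic elsewhere. Then the zero partition of $q$ is either $4=2+2$ or $4=1+1+1+1$, i.e. $q$ has two double zeroes or four simple zeroes.
   Context: A double pole $p$ of $q$ has residue $a>0$ if, in a local coordinate $z$ with $z(p)=0$, $q=\bigl(-\frac{a^2}{4\pi^2 z^2}+O(z^{-1})\bigr)dz^2$. Such a $q$ has four zeroes counted with multiplicity. *)

theory Defs
  imports "HOL-Complex_Analysis.Complex_Analysis" "HOL-Library.Landau_Symbols"
begin

text \<open>Points of the Riemann sphere P^1: Some z is the finite point z, None is infinity.
A meromorphic quadratic differential q on P^1 is given by its coefficient f in the
standard coordinate z, i.e. q = f(z) dz^2.  In the chart w = 1/z near infinity,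
dz = -dw/w^2, so q = f(1/w) w^(-4) dw^2.\<close>

definition qd_local :: "(complex \<Rightarrow> complex) \<Rightarrow> complex option \<Rightarrow> complex \<Rightarrow> complex" where
  "qd_local f x = (case x of Some p \<Rightarrow> (\<lambda>t. f (p + t)) | None \<Rightarrow> (\<lambda>t. f (1 / t) / t ^ 4))"

definition meromorphic_qd :: "(complex \<Rightarrow> complex) \<Rightarrow> bool" where
  "meromorphic_qd f \<longleftrightarrow> (\<forall>x. qd_local f x meromorphic_on {0})"

definition qd_order :: "(complex \<Rightarrow> complex) \<Rightarrow> complex option \<Rightarrow> int" where
  "qd_order f x = zorder (qd_local f x) 0"

definition qd_holomorphic_at :: "(complex \<Rightarrow> complex) \<Rightarrow> complex option \<Rightarrow> bool" where
  "qd_holomorphic_at f x \<longleftrightarrow>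
     (\<exists>g. g analytic_on {0} \<and> (\<forall>\<^sub>F t in at 0. qd_local f x t = g t))"

definition qd_double_pole_residue :: "(complex \<Rightarrow> complex) \<Rightarrow> complex option \<Rightarrow> real \<Rightarrow> bool" where
  "qd_double_pole_residue f x a \<longleftrightarrow>
     is_pole (qd_local f x) 0 \<and> qd_order f x = -2 \<and>
     (\<lambda>t. qd_local f x t - (- (complex_of_real (a ^ 2)) / (4 * complex_of_real (pi ^ 2) * t ^ 2)))
        \<in> O[at 0](\<lambda>t. 1 / t)"

definition qd_zeros :: "(complex \<Rightarrow> complex) \<Rightarrow> complex option set" where
  "qd_zeros f = {x. qd_order f x > 0}"

end

theory Submission imports Defs "HOL-Computational_Algebra.Fundamental_Theorem_Algebra" begin
definition ev :: "(nat \<Rightarrow> complex) \<Rightarrow> complex \<Rightarrow> complex" where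
  "ev c z = c 0 + c 1 * z + c 2 * z^2 + c 3 * z^3 + c 4 * z^4"

definition hh :: "(nat \<Rightarrow> complex) \<Rightarrow> nat \<Rightarrow> complex" where
  "hh e i = (if i = 0 then 3*e 1^2 - 8*e 0*e 2 else if i = 1 then 4*e 1*e 2 - 24*e 0*e 3
     else if i = 2 then 4*e 2^2 - 6*e 1*e 3 - 48*e 0*e 4 else if i = 3 then 4*e 2*e 3 - 24*e 1*e 4
     else if i = 4 then 3*e 3^2 - 8*e 2*e 4 else 0)"

definition tay :: "(nat \<Rightarrow> complex) \<Rightarrow> complex \<Rightarrow> nat \<Rightarrow> complex" where
  "tay c r i = (if i = 0 then ev c r else if i = 1 then c 1 + 2*c 2*r + 3*c 3*r^2 + 4*c 4*r^3
     else if i = 2 then c 2 + 3*c 3*r + 6*c 4*r^2 else if i = 3 then c 3 + 4*c 4*r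
     else if i = 4 then c 4 else 0)"

lemma ev_tay: "ev c (r + t) = ev (tay c r) t"
  unfolding ev_def tay_def by (simp add: algebra_simps power2_eq_square power3_eq_cube power4_eq_xxxx)

lemma hh_tay: "hh (tay e r) i = tay (hh e) r i"
  unfolding hh_def tay_def ev_def by (simp add: algebra_simps power2_eq_square power3_eq_cube power4_eq_xxxx)

lemma tay_lin: "tay (\<lambda>i. a * e i + b * g i) r i = a * tay e r i + b * tay g r i"
  unfolding tay_def ev_def by (simp add: algebra_simps)

lemma tay_tay: "tay (tay c r) u i = tay c (r + u) i"
  unfolding tay_def ev_def by (simp add: algebra_simps power2_eq_square power3_eq_cube power4_eq_xxxx)

lemma core1:
  assumes "e 0 \<noteq> 0" "\<And>i. q i = a * e i + b * hh e i" "q 0 = 0" "q 1 = 0"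
  shows "q 3 ^ 2 = 4 * q 4 * q 2"
proof -
  have "(a*e 3 + b*(4*e 2*e 3 - 24*e 1*e 4))^2 = 4*(a*e 4 + b*(3*e 3^2 - 8*e 2*e 4))*(a*e 2 + b*(4*e 2^2 - 6*e 1*e 3 - 48*e 0*e 4))"
  proof -
    have h0: "a*e 0 + b*(3*e 1^2 - 8*e 0*e 2) = 0" using assms(2)[of 0] assms(3) by (simp add: hh_def)
    have h1: "a*e 1 + b*(4*e 1*e 2 - 24*e 0*e 3) = 0" using assms(2)[of 1] assms(4) by (simp add: hh_def)
    show ?thesis using assms(1) h0 h1 by algebra
  qed
  thus ?thesis using assms(2)[of 2] assms(2)[of 3] assms(2)[of 4] by (simp add: hh_def)
qed

lemma core2:
  assumes "e 0 \<noteq> 0" "b \<noteq> 0" "\<And>i. q i = a * e i + b * hh e i" "q 0 = 0" "q 1 = 0" "q 2 = 0"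
  shows "64 * e 0^3 * ev e t = (8 * e 0^2 + 4 * e 0 * e 1 * t + (4 * e 0 * e 2 - e 1^2) * t^2)^2"
proof -
  have h0: "a*e 0 + b*(3*e 1^2 - 8*e 0*e 2) = 0" using assms(3)[of 0] assms(4) by (simp add: hh_def)
  have h1: "a*e 1 + b*(4*e 1*e 2 - 24*e 0*e 3) = 0" using assms(3)[of 1] assms(5) by (simp add: hh_def)
  have h2: "a*e 2 + b*(4*e 2^2 - 6*e 1*e 3 - 48*e 0*e 4) = 0" using assms(3)[of 2] assms(6) by (simp add: hh_def)
  have "8*e 0^2*e 3 = e 1*(4*e 0*e 2-e 1^2) \<and> 64*e 0^3*e 4 = (4*e 0*e 2-e 1^2)^2"
    using assms(1,2) h0 h1 h2 by algebra
  thus ?thesis unfolding ev_def by algebra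
qed

lemma core1r:
  assumes "e 4 \<noteq> 0" "\<And>i. q i = a * e i + b * hh e i" "q 4 = 0" "q 3 = 0"
  shows "q 1 ^ 2 = 4 * q 0 * q 2"
proof -
  have "(a*e 1 + b*(4*e 2*e 1 - 24*e 3*e 0))^2 = 4*(a*e 0 + b*(3*e 1^2 - 8*e 2*e 0))*(a*e 2 + b*(4*e 2^2 - 6*e 3*e 1 - 48*e 4*e 0))"
  proof -
    have h0: "a*e 4 + b*(3*e 3^2 - 8*e 4*e 2) = 0" using assms(2)[of 4] assms(3) by (simp add: hh_def algebra_simps)
    have h1: "a*e 3 + b*(4*e 3*e 2 - 24*e 4*e 1) = 0" using assms(2)[of 3] assms(4) by (simp add: hh_def algebra_simps)
    show ?thesis using assms(1) h0 h1 by algebra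
  qed
  moreover have "q 1 = a*e 1 + b*(4*e 2*e 1 - 24*e 3*e 0)" using assms(2)[of 1] by (simp add: hh_def algebra_simps)
  moreover have "q 0 = a*e 0 + b*(3*e 1^2 - 8*e 2*e 0)" using assms(2)[of 0] by (simp add: hh_def algebra_simps)
  moreover have "q 2 = a*e 2 + b*(4*e 2^2 - 6*e 3*e 1 - 48*e 4*e 0)" using assms(2)[of 2] by (simp add: hh_def algebra_simps)
  ultimately show ?thesis by simp
qed

lemma core2r:
  assumes "e 4 \<noteq> 0" "b \<noteq> 0" "\<And>i. q i = a * e i + b * hh e i" "q 4 = 0" "q 3 = 0" "q 2 = 0"
  shows "64 * e 4^3 * ev e t = (8 * e 4^2 * t^2 + 4 * e 4 * e 3 * t + (4 * e 4 * e 2 - e 3^2))^2"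
proof -
  have h0: "a*e 4 + b*(3*e 3^2 - 8*e 4*e 2) = 0" using assms(3)[of 4] assms(4) by (simp add: hh_def algebra_simps)
  have h1: "a*e 3 + b*(4*e 3*e 2 - 24*e 4*e 1) = 0" using assms(3)[of 3] assms(5) by (simp add: hh_def algebra_simps)
  have h2: "a*e 2 + b*(4*e 2^2 - 6*e 3*e 1 - 48*e 4*e 0) = 0" using assms(3)[of 2] assms(6) by (simp add: hh_def algebra_simps)
  have "8*e 4^2*e 1 = e 3*(4*e 4*e 2-e 3^2) \<and> 64*e 4^3*e 0 = (4*e 4*e 2-e 3^2)^2"
    using assms(1,2) h0 h1 h2 by algebra
  thus ?thesis unfolding ev_def by algebra
qed

lemma zorder_helper:
  fixes F R Q :: "complex \<Rightarrow> complex"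
  assumes ev: "eventually (\<lambda>t. F t = t^m * R t / Q t ^ 2) (at 0)"
    and hR: "R holomorphic_on ball 0 r" and hQ: "Q holomorphic_on ball 0 r" and r: "r > 0"
    and Qnz: "\<forall>t\<in>ball 0 r. Q t \<noteq> 0" and R0: "R 0 \<noteq> 0"
  shows "zorder F 0 = int m"
proof -
  have "zorder F 0 = zorder (\<lambda>t. R t / Q t ^ 2 * t ^ m) 0"
    by (rule zorder_cong[OF _ refl]) (use ev in \<open>eventually_elim, simp\<close>)
  also have "\<dots> = int m"
  proof (rule zorder_eqI[of "ball 0 r" 0 "\<lambda>t. R t / Q t^2"])
    show "(\<lambda>t. R t / Q t ^ 2) holomorphic_on ball 0 r"
      using hR hQ Qnz by (auto intro!: holomorphic_intros)
    show "R 0 / Q 0 ^ 2 \<noteq> 0" using R0 Qnz r by auto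
  qed (use r in auto)
  finally show ?thesis .
qed

lemma mero_shift:
  assumes "(\<lambda>t. f (z + t)) meromorphic_on {0}"
  shows "f meromorphic_on {z}"
  using assms unfolding meromorphic_on_def by simp

lemma limit_from_bigo:
  fixes \<phi> :: "complex \<Rightarrow> complex"
  assumes "\<phi> \<in> O[at 0](\<lambda>t. 1 / t)"
  shows "((\<lambda>t. t^2 * \<phi> t) \<longlongrightarrow> 0) (at 0)"
proof -
  obtain c where c: "c > 0" "eventually (\<lambda>t. norm (\<phi> t) \<le> c * norm (1 / t)) (at 0)"
    using assms by (elim landau_o.bigE)
  show ?thesis
  proof (rule Lim_null_comparison)
    show "eventually (\<lambda>t. norm (t^2 * \<phi> t) \<le> c * norm t) (at 0)"
      using c(2)
    proof (eventually_elim)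
      case (elim t)
      have "norm (t^2 * \<phi> t) = norm t ^ 2 * norm (\<phi> t)" by (simp add: norm_mult norm_power)
      also have "\<dots> \<le> norm t ^ 2 * (c * norm (1 / t))" using elim by (intro mult_left_mono) auto
      also have "\<dots> = c * norm t" by (cases "t = 0") (simp_all add: norm_divide power2_eq_square)
      finally show ?case .
    qed
    show "((\<lambda>t. c * norm t) \<longlongrightarrow> 0) (at (0::complex))"
      by (auto intro!: tendsto_eq_intros)
  qed
qed


theorem lemma3p1:
  fixes f :: "complex \<Rightarrow> complex" and P :: "complex option set"
  assumes "meromorphic_qd f"
    and "card P = 4"
    and "\<forall>x\<in>P. qd_double_pole_residue f x 1"
    and "\<forall>x. x \<notin> P \<longrightarrow> qd_holomorphic_at f x"
  shows "(card (qd_zeros f) = 2 \<and> (\<forall>x\<in>qd_zeros f. qd_order f x = 2)) \<or>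
         (card (qd_zeros f) = 4 \<and> (\<forall>x\<in>qd_zeros f. qd_order f x = 1))"
proof -
  define k :: complex where "k = 1 / (4 * complex_of_real (pi^2))"
  have k0: "k \<noteq> 0" by (simp add: k_def)
  define F where "F = {z. Some z \<in> P}"
  have finP: "finite P" using assms(2) by (metis card.infinite zero_neq_numeral)
  have FSP: "F = Some -` P" by (auto simp: F_def)
  have finF: "finite F" unfolding FSP using finP by (simp add: finite_vimageI)
  have Pdec: "P = Some ` F \<union> (P \<inter> {None})"
  proof (intro equalityI subsetI)
    fix x assume "x \<in> P" thus "x \<in> Some ` F \<union> (P \<inter> {None})" by (cases x) (auto simp: F_def)
  qed (auto simp: F_def)
  have cardF: "card F = (if None \<in> P then 3 else 4)"
  proof -
    have "card P = card (Some ` F) + card (P \<inter> {None})"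
      by (subst Pdec, rule card_Un_disjoint) (use finF finP in auto)
    also have "card (Some ` F) = card F" by (simp add: card_image)
    finally have *: "4 = card F + card (P \<inter> {None})" using assms(2) by simp
    show ?thesis
    proof (cases "None \<in> P")
      case True
      hence "P \<inter> {None} = {None}" by auto
      thus ?thesis using * True by simp
    next
      case False
      hence "P \<inter> {None} = {}" by auto
      thus ?thesis using * False by simp
    qed
  qed
  define pp where "pp = (\<Prod>p\<in>F. [:-p, 1:])"
  define D where "D = (\<lambda>z. \<Prod>p\<in>F. (z - p))"
  have D_pp: "poly pp z = D z" for z by (simp add: pp_def D_def poly_prod)
  have D0: "D z = 0 \<longleftrightarrow> z \<in> F" for z using finF by (simp add: D_def)
  define G where "G = (\<lambda>w. f w * D w ^ 2)"
  have Dana: "D analytic_on A" for A unfolding D_def by (auto intro!: analytic_intros)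

  have mero: "f meromorphic_on {z}" for z
  proof -
    have "qd_local f (Some z) meromorphic_on {0}" using assms(1) unfolding meromorphic_qd_def by blast
    hence "(\<lambda>t. f (z + t)) meromorphic_on {0}" by (simp add: qd_local_def)
    thus ?thesis by (rule mero_shift)
  qed

  obtain R where R: "R > 0" "\<And>w. R < norm w \<Longrightarrow> f analytic_on {w}"
  proof -
    define \<phi> where "\<phi> = (\<lambda>t. f (1 / t) / t ^ 4)"
    have "qd_local f None meromorphic_on {0}" using assms(1) unfolding meromorphic_qd_def by blast
    hence "\<phi> meromorphic_on {0}" by (simp add: qd_local_def \<phi>_def)
    hence "isolated_singularity_at \<phi> 0" by (simp add: meromorphic_at_iff)
    then obtain r where r: "r > 0" "\<phi> analytic_on ball 0 r - {0}"
      unfolding isolated_singularity_at_def by blast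
    define S where "S = {w::complex. 1 / r < norm w}"
    have oS: "open S" unfolding S_def by (intro open_Collect_less continuous_intros)
    have S0: "w \<in> S \<Longrightarrow> w \<noteq> 0" for w using r by (auto simp: S_def)
    have "(\<phi> \<circ> inverse) analytic_on S"
    proof (rule analytic_on_compose_gen[OF _ r(2)])
      show "inverse analytic_on S" using S0 by (auto intro!: analytic_intros)
      show "inverse z \<in> ball 0 r - {0}" if "z \<in> S" for z
        using that S0[OF that] r(1) by (auto simp: S_def norm_inverse norm_divide field_simps)
    qed
    hence A: "(\<lambda>w. \<phi> (inverse w)) analytic_on S" by (simp add: o_def)
    have "(\<lambda>w. inverse w ^ 4) analytic_on S" using S0 by (auto intro!: analytic_intros)
    hence "(\<lambda>w. \<phi> (inverse w) * inverse w ^ 4) analytic_on S" by (rule analytic_on_mult[OF A])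
    hence "(\<lambda>w. \<phi> (inverse w) * inverse w ^ 4) holomorphic_on S"
      by (rule analytic_imp_holomorphic)
    hence "f holomorphic_on S"
      by (rule holomorphic_transform) (use S0 in \<open>auto simp: \<phi>_def field_simps\<close>)
    hence "f analytic_on S" using oS by (simp add: analytic_on_open)
    show ?thesis
    proof (rule that[of "1 / r"])
      show "0 < 1 / r" using r by simp
      show "f analytic_on {w}" if "1 / r < norm w" for w
        using analytic_on_subset[OF \<open>f analytic_on S\<close>, of "{w}"] that by (auto simp: S_def)
    qed
  qed

  have limfin: "\<exists>c. f \<midarrow>z\<rightarrow> c" if "z \<notin> F" for z
  proof -
    have "qd_holomorphic_at f (Some z)" using assms(4) that by (auto simp: F_def)
    then obtain g where g: "g analytic_on {0}" "eventually (\<lambda>t. f (z + t) = g t) (at 0)"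
      by (auto simp: qd_holomorphic_at_def qd_local_def)
    have "g \<midarrow>0\<rightarrow> g 0" using analytic_at_imp_isCont[OF g(1)] by (simp add: isCont_def)
    hence "(\<lambda>t. f (z + t)) \<midarrow>0\<rightarrow> g 0"
      by (rule Lim_transform_eventually) (rule eventually_mono[OF g(2)], simp)
    thus ?thesis using LIM_offset_zero_cancel by blast
  qed

  have limpole: "((\<lambda>t. t^2 * f (p + t)) \<longlongrightarrow> -k) (at 0)" if "p \<in> F" for p
  proof -
    have "qd_double_pole_residue f (Some p) 1" using assms(3) that by (auto simp: F_def)
    hence "(\<lambda>t. f (p + t) - (- (complex_of_real (1 ^ 2)) / (4 * complex_of_real (pi ^ 2) * t ^ 2)))
        \<in> O[at 0](\<lambda>t. 1 / t)" by (simp add: qd_double_pole_residue_def qd_local_def)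
    from limit_from_bigo[OF this]
    have "((\<lambda>t. t^2 * f (p + t) + k) \<longlongrightarrow> 0) (at 0)"
    proof (rule Lim_transform_eventually)
      show "\<forall>\<^sub>F t in at 0. t\<^sup>2 * (f (p + t) - - complex_of_real (1\<^sup>2) / (4 * complex_of_real (pi\<^sup>2) * t\<^sup>2)) = t\<^sup>2 * f (p + t) + k"
        unfolding eventually_at_filter
        by (intro always_eventually allI impI) (simp add: k_def field_simps)
    qed
    hence "((\<lambda>t. (t^2 * f (p + t) + k) - k) \<longlongrightarrow> 0 - k) (at 0)"
      by (intro tendsto_intros)
    thus ?thesis by simp
  qed

  have Dinv: "D (1 / t) * t ^ card F = (\<Prod>p\<in>F. 1 - p * t)" if "t \<noteq> 0" for t
  proof -
    have "D (1 / t) * t ^ card F = (\<Prod>p\<in>F. (1 / t - p) * t)"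
      by (simp add: D_def prod.distrib)
    also have "\<dots> = (\<Prod>p\<in>F. 1 - p * t)"
      using that by (intro prod.cong) (auto simp: field_simps)
    finally show ?thesis .
  qed
  have prodlim: "((\<lambda>t. (\<Prod>p\<in>F. 1 - p * t)) \<longlongrightarrow> 1) (at 0)"
  proof -
    have "((\<lambda>t. (\<Prod>p\<in>F. 1 - p * t)) \<longlongrightarrow> (\<Prod>p\<in>F. 1 - p * 0)) (at 0)"
      by (intro tendsto_intros)
    thus ?thesis by simp
  qed

  obtain L where L: "((\<lambda>t. G (1 / t) * t ^ 4) \<longlongrightarrow> L) (at 0)" "None \<in> P \<Longrightarrow> L = -k"
  proof (cases "None \<in> P")
    case True
    hence "qd_double_pole_residue f None 1" using assms(3) by auto
    hence "(\<lambda>t. f (1 / t) / t ^ 4 - (- (complex_of_real (1 ^ 2)) / (4 * complex_of_real (pi ^ 2) * t ^ 2)))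
        \<in> O[at 0](\<lambda>t. 1 / t)" by (simp add: qd_double_pole_residue_def qd_local_def)
    from limit_from_bigo[OF this]
    have "((\<lambda>t. f (1 / t) / t ^ 2 + k) \<longlongrightarrow> 0) (at 0)"
    proof (rule Lim_transform_eventually)
      show "\<forall>\<^sub>F t in at 0. t\<^sup>2 * (f (1 / t) / t ^ 4 - - complex_of_real (1\<^sup>2) / (4 * complex_of_real (pi\<^sup>2) * t\<^sup>2)) = f (1 / t) / t ^ 2 + k"
        unfolding eventually_at_filter
        by (intro always_eventually allI impI) (simp add: k_def field_simps power2_eq_square power4_eq_xxxx)
    qed
    hence "((\<lambda>t. (f (1 / t) / t ^ 2 + k) - k) \<longlongrightarrow> 0 - k) (at 0)"
      by (intro tendsto_intros)
    hence l1: "((\<lambda>t. f (1 / t) / t ^ 2) \<longlongrightarrow> -k) (at 0)" by simp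
    have l2: "((\<lambda>t. f (1 / t) / t ^ 2 * (\<Prod>p\<in>F. 1 - p * t) ^ 2) \<longlongrightarrow> -k) (at 0)"
      using tendsto_mult[OF l1 tendsto_power[OF prodlim, of 2]] by simp
    have "((\<lambda>t. G (1 / t) * t ^ 4) \<longlongrightarrow> -k) (at 0)"
    proof (rule Lim_transform_eventually[OF l2])
      show "\<forall>\<^sub>F x in at 0. f (1 / x) / x\<^sup>2 * (\<Prod>p\<in>F. 1 - p * x)\<^sup>2 = G (1 / x) * x ^ 4"
        unfolding eventually_at_filter
      proof (intro always_eventually allI impI)
        fix t :: complex assume t: "t \<noteq> 0"
        have "(\<Prod>p\<in>F. 1 - p * t) = D (1 / t) * t ^ 3" using Dinv[OF t] True cardF by simp
        thus "f (1 / t) / t\<^sup>2 * (\<Prod>p\<in>F. 1 - p * t)\<^sup>2 = G (1 / t) * t ^ 4"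
          using t by (simp add: G_def field_simps power2_eq_square power3_eq_cube power4_eq_xxxx)
      qed
    qed
    thus ?thesis using that by blast
  next
    case False
    hence "qd_holomorphic_at f None" using assms(4) by auto
    then obtain g where g: "g analytic_on {0}" "eventually (\<lambda>t. f (1 / t) / t ^ 4 = g t) (at 0)"
      by (auto simp: qd_holomorphic_at_def qd_local_def)
    have "g \<midarrow>0\<rightarrow> g 0" using analytic_at_imp_isCont[OF g(1)] by (simp add: isCont_def)
    hence l1: "((\<lambda>t. f (1 / t) / t ^ 4) \<longlongrightarrow> g 0) (at 0)"
      by (rule Lim_transform_eventually) (rule eventually_mono[OF g(2)], simp)
    have l2: "((\<lambda>t. f (1 / t) / t ^ 4 * (\<Prod>p\<in>F. 1 - p * t) ^ 2) \<longlongrightarrow> g 0) (at 0)"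
      using tendsto_mult[OF l1 tendsto_power[OF prodlim, of 2]] by simp
    have "((\<lambda>t. G (1 / t) * t ^ 4) \<longlongrightarrow> g 0) (at 0)"
    proof (rule Lim_transform_eventually[OF l2])
      show "\<forall>\<^sub>F x in at 0. f (1 / x) / x ^ 4 * (\<Prod>p\<in>F. 1 - p * x)\<^sup>2 = G (1 / x) * x ^ 4"
        unfolding eventually_at_filter
      proof (intro always_eventually allI impI)
        fix t :: complex assume t: "t \<noteq> 0"
        have "(\<Prod>p\<in>F. 1 - p * t) = D (1 / t) * t ^ 4" using Dinv[OF t] False cardF by simp
        thus "f (1 / t) / t ^ 4 * (\<Prod>p\<in>F. 1 - p * t)\<^sup>2 = G (1 / t) * t ^ 4"
          using t by (simp add: G_def field_simps power2_eq_square power3_eq_cube power4_eq_xxxx)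
      qed
    qed
    thus ?thesis using that False by blast
  qed

  have Gpole: "G \<midarrow>p\<rightarrow> (-k * (\<Prod>q\<in>F-{p}. p - q) ^ 2)" if "p \<in> F" for p
  proof -
    have eq: "G (p + t) = (t^2 * f (p + t)) * (\<Prod>q\<in>F-{p}. p + t - q) ^ 2" for t
    proof -
      have "D (p + t) = (p + t - p) * (\<Prod>q\<in>F-{p}. p + t - q)"
        unfolding D_def using finF that by (subst prod.remove) auto
      thus ?thesis by (simp add: G_def power_mult_distrib)
    qed
    have "((\<lambda>t. (t^2 * f (p + t)) * (\<Prod>q\<in>F-{p}. p + t - q) ^ 2) \<longlongrightarrow> -k * (\<Prod>q\<in>F-{p}. p + 0 - q) ^ 2) (at 0)"
      by (intro tendsto_mult tendsto_power tendsto_prod limpole[OF that] tendsto_intros)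
    hence "(\<lambda>t. G (p + t)) \<midarrow>0\<rightarrow> (-k * (\<Prod>q\<in>F-{p}. p - q) ^ 2)"
      by (simp add: eq)
    thus ?thesis by (rule LIM_offset_zero_cancel)
  qed
  have Glim: "\<exists>c. G \<midarrow>z\<rightarrow> c" for z
  proof (cases "z \<in> F")
    case True thus ?thesis using Gpole by blast
  next
    case False
    then obtain c where c: "f \<midarrow>z\<rightarrow> c" using limfin by blast
    have "isCont (\<lambda>w. D w ^ 2) z" by (rule analytic_at_imp_isCont[OF analytic_on_power[OF Dana]])
    hence "(\<lambda>w. D w ^ 2) \<midarrow>z\<rightarrow> D z ^ 2" by (simp add: isCont_def)
    hence "G \<midarrow>z\<rightarrow> c * D z ^ 2" unfolding G_def by (rule tendsto_mult[OF c])
    thus ?thesis by blast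
  qed
  have Giso: "isolated_singularity_at G z" for z
  proof -
    have "(\<lambda>w. D w ^ 2) analytic_on {z}" by (rule analytic_on_power[OF Dana])
    hence "G meromorphic_on {z}" unfolding G_def
      by (rule meromorphic_on_mult[OF mero analytic_on_imp_meromorphic_on])
    thus ?thesis by (simp add: meromorphic_at_iff)
  qed
  define E0 where "E0 = remove_sings G"
  have E0ana: "E0 analytic_on {z}" for z
  proof -
    obtain c where c: "G \<midarrow>z\<rightarrow> c" using Glim by blast
    show ?thesis unfolding E0_def by (rule remove_sings_analytic_at[OF Giso c])
  qed
  have E0hol: "E0 holomorphic_on UNIV"
  proof -
    have "E0 analytic_on UNIV" unfolding analytic_on_analytic_at[of _ UNIV] using E0ana by blast
    thus ?thesis by (rule analytic_imp_holomorphic)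
  qed
  have E0ev: "eventually (\<lambda>w. E0 w = G w) (at z)" for z
    unfolding E0_def by (rule eventually_remove_sings_eq_at[OF Giso])
  have E0pole: "E0 p = -k * (\<Prod>q\<in>F-{p}. p - q) ^ 2" if "p \<in> F" for p
    unfolding E0_def using Gpole[OF that] by (rule remove_sings_eqI)
  have E0inf: "E0 w = G w" if "R < norm w" for w
  proof -
    have "G analytic_on {w}" unfolding G_def
      by (rule analytic_on_mult[OF R(2)[OF that] analytic_on_power[OF Dana]])
    thus ?thesis unfolding E0_def by (rule remove_sings_at_analytic)
  qed

  obtain d where d: "d > 0" "\<And>t. t \<noteq> 0 \<Longrightarrow> norm t < d \<Longrightarrow> norm (G (1/t) * t^4) < norm L + 1"
  proof -
    have "((\<lambda>t. norm (G (1/t) * t^4)) \<longlongrightarrow> norm L) (at 0)" by (rule tendsto_norm[OF L(1)])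
    hence "eventually (\<lambda>t. norm (G (1/t) * t^4) < norm L + 1) (at 0)" by (rule order_tendstoD) simp
    then obtain d where "d > 0" "\<forall>t. t \<noteq> 0 \<and> dist t 0 < d \<longrightarrow> norm (G (1/t) * t^4) < norm L + 1"
      unfolding eventually_at by auto
    thus ?thesis using that by auto
  qed
  define A where "A = max (R + 1) (2 / d)"
  have bound: "norm (E0 z) \<le> (norm L + 1) * norm z ^ 4" if "A \<le> norm z" for z
  proof -
    have z: "R + 1 \<le> norm z" "2 / d \<le> norm z" using that by (auto simp: A_def)
    hence zR: "R < norm z" by simp
    have nz: "norm z > 0" using z R(1) by linarith
    hence z0: "z \<noteq> 0" by auto
    have "norm (1 / z) = 1 / norm z" by (simp add: norm_divide)
    also have "\<dots> \<le> d / 2" using z(2) nz d(1) by (simp add: field_simps)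
    also have "\<dots> < d" using d(1) by simp
    finally have "norm (G (1 / (1 / z)) * (1 / z)^4) < norm L + 1" using d(2)[of "1 / z"] z0 by simp
    hence "norm (G z) / norm z ^ 4 < norm L + 1" by (simp add: norm_mult norm_divide norm_power power_one_over)
    hence "norm (G z) < (norm L + 1) * norm z ^ 4" using nz by (simp add: field_simps)
    thus ?thesis using E0inf[OF zR] by simp
  qed
  define c where "c = (\<lambda>i. (deriv ^^ i) E0 0 / fact i)"
  have E0c: "E0 z = ev c z" for z
  proof -
    have "E0 z = (\<Sum>i\<le>4. (deriv ^^ i) E0 0 / fact i * z ^ i)"
      by (rule Liouville_polynomial[OF E0hol bound])
    also have "\<dots> = ev c z" by (simp add: ev_def c_def eval_nat_numeral algebra_simps)
    finally show ?thesis .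
  qed
  have c4L: "c 4 = L"
  proof -
    have "((\<lambda>t. E0 (1/t) * t^4) \<longlongrightarrow> L) (at 0)"
    proof (rule Lim_transform_eventually[OF L(1)])
      show "eventually (\<lambda>t. G (1/t) * t^4 = E0 (1/t) * t^4) (at 0)"
        unfolding eventually_at
      proof (intro exI[of _ "1 / R"] conjI ballI impI)
        show "0 < 1 / R" using R(1) by simp
        fix t :: complex assume t: "t \<noteq> 0 \<and> dist t 0 < 1 / R"
        hence "R < norm (1 / t)" using R(1) by (simp add: norm_divide field_simps)
        thus "G (1/t) * t^4 = E0 (1/t) * t^4" using E0inf by simp
      qed
    qed
    moreover have "((\<lambda>t. E0 (1/t) * t^4) \<longlongrightarrow> c 4) (at 0)"
    proof -
      have "((\<lambda>t. c 4 + c 3 * t + c 2 * t^2 + c 1 * t^3 + c 0 * t^4) \<longlongrightarrow> c 4 + c 3 * 0 + c 2 * 0^2 + c 1 * 0^3 + c 0 * 0^4) (at 0)"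
        by (intro tendsto_intros)
      hence "((\<lambda>t. c 4 + c 3 * t + c 2 * t^2 + c 1 * t^3 + c 0 * t^4) \<longlongrightarrow> c 4) (at 0)" by simp
      thus ?thesis
      proof (rule Lim_transform_eventually)
        show "eventually (\<lambda>t. c 4 + c 3 * t + c 2 * t^2 + c 1 * t^3 + c 0 * t^4 = E0 (1/t) * t^4) (at 0)"
          unfolding eventually_at_filter
          by (intro always_eventually allI impI)
             (simp add: E0c ev_def field_simps power2_eq_square power3_eq_cube power4_eq_xxxx)
      qed
    qed
    ultimately show ?thesis using tendsto_unique[OF at_neq_bot] by blast
  qed
  have notF: "eventually (\<lambda>w. w \<notin> F) (at z)" for z
  proof -
    obtain \<delta> where \<delta>: "\<delta> > 0" "\<forall>x\<in>F. x \<noteq> z \<longrightarrow> \<delta> \<le> dist z x"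
      using finite_set_avoid[OF finF] by blast
    show ?thesis unfolding eventually_at
      by (rule exI[of _ \<delta>]) (use \<delta> in \<open>auto simp: dist_commute\<close>)
  qed
  have feq: "eventually (\<lambda>w. f w = ev c w / D w ^ 2) (at z)" for z
    using E0ev[of z] notF[of z]
  proof eventually_elim
    case (elim w)
    hence "D w \<noteq> 0" using D0 by auto
    thus ?case using elim by (simp add: E0c[symmetric] G_def field_simps)
  qed
  define R2 where "R2 = R + (\<Sum>p\<in>F. norm p)"
  have bigNF: "w \<notin> F" if "R2 < norm w" for w
  proof
    assume "w \<in> F"
    hence "norm w \<le> (\<Sum>p\<in>F. norm p)" using finF by (intro member_le_sum) auto
    thus False using that R(1) by (simp add: R2_def)
  qed
  have feqinf: "f w = ev c w / D w ^ 2" if "R2 < norm w" for w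
  proof -
    have s0: "0 \<le> (\<Sum>p\<in>F. norm p)" by (simp add: sum_nonneg)
    have "w \<notin> F" using bigNF[OF that] .
    hence "D w \<noteq> 0" using D0 by auto
    moreover have "E0 w = G w" using that s0 by (intro E0inf) (simp add: R2_def)
    ultimately show ?thesis by (simp add: E0c[symmetric] G_def field_simps)
  qed

  define e where "e = (\<lambda>i. coeff pp i)"
  have lin0: "[:-p, 1:] \<noteq> (0::complex poly)" for p by simp
  have degpp: "degree pp = card F"
    unfolding pp_def by (subst degree_prod_eq_sum_degree) (auto simp: lin0)
  have lcpp: "coeff pp (card F) = 1"
    using lead_coeff_prod[of "\<lambda>p. [:-p, 1:]" F] degpp unfolding pp_def by simp
  have cardF4: "card F \<le> 4" using cardF by (simp split: if_splits)
  have cardF3: "3 \<le> card F" using cardF by (simp split: if_splits)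
  have Dev: "D z = ev e z" for z
  proof -
    have "D z = (\<Sum>i\<le>degree pp. e i * z ^ i)" unfolding e_def D_pp[symmetric] by (rule poly_altdef)
    also have "\<dots> = (\<Sum>i\<le>4. e i * z ^ i)"
    proof (rule sum.mono_neutral_left)
      show "\<forall>i\<in>{..4} - {..degree pp}. e i * z ^ i = 0"
        using degpp cardF4 by (auto simp: e_def coeff_eq_0)
    qed (use degpp cardF4 in auto)
    also have "\<dots> = ev e z" by (simp add: ev_def eval_nat_numeral algebra_simps)
    finally show ?thesis .
  qed
  have e_top: "(None \<in> P \<longrightarrow> e 4 = 0 \<and> e 3 = 1) \<and> (None \<notin> P \<longrightarrow> e 4 = 1)"
    using lcpp degpp cardF by (auto simp: e_def coeff_eq_0)
  define dD where "dD = (\<lambda>z. e 1 + 2*e 2*z + 3*e 3*z^2 + 4*e 4*z^3)"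
  have dDpoly: "poly (pderiv pp) z = dD z" for z
  proof -
    have dg: "degree (pderiv pp) \<le> 3" using degpp cardF4 by (simp add: degree_pderiv)
    have "poly (pderiv pp) z = (\<Sum>i\<le>degree (pderiv pp). coeff (pderiv pp) i * z ^ i)" by (rule poly_altdef)
    also have "\<dots> = (\<Sum>i\<le>3. coeff (pderiv pp) i * z ^ i)"
    proof (rule sum.mono_neutral_left)
      show "\<forall>i\<in>{..3} - {..degree (pderiv pp)}. coeff (pderiv pp) i * z ^ i = 0"
        using dg by (auto simp: coeff_eq_0)
    qed (use dg in auto)
    also have "\<dots> = dD z" by (simp add: dD_def e_def coeff_pderiv eval_nat_numeral algebra_simps)
    finally show ?thesis .
  qed
  have dDpole: "dD p = (\<Prod>q\<in>F-{p}. p - q)" if "p \<in> F" for p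
  proof -
    have "dD p = (\<Sum>a\<in>F. \<Prod>q\<in>F-{a}. p - q)"
      unfolding dDpoly[symmetric] pp_def pderiv_prod by (simp add: poly_sum poly_prod pderiv_pCons)
    also have "\<dots> = (\<Prod>q\<in>F-{p}. p - q) + (\<Sum>a\<in>F-{p}. \<Prod>q\<in>F-{a}. p - q)"
      using finF that by (subst sum.remove) auto
    also have "(\<Sum>a\<in>F-{p}. \<Prod>q\<in>F-{a}. p - q) = 0"
    proof (rule sum.neutral, rule ballI)
      fix a assume "a \<in> F - {p}"
      hence "p \<in> F - {a}" using that by auto
      thus "(\<Prod>q\<in>F-{a}. p - q) = 0" using finF by (intro prod_zero) auto
    qed
    finally show ?thesis by simp
  qed
  have hhD: "ev (hh e) z = 3 * dD z ^ 2 - 4 * ev e z * (2*e 2 + 6*e 3*z + 12*e 4*z^2)" for z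
    unfolding ev_def hh_def dD_def by (simp add: algebra_simps power2_eq_square power3_eq_cube power4_eq_xxxx)
  define \<beta> where "\<beta> = - k / 3"
  have b0: "\<beta> \<noteq> 0" using k0 by (simp add: \<beta>_def)
  have interp: "ev c p = \<beta> * ev (hh e) p" if "p \<in> F" for p
  proof -
    have "ev e p = 0" using Dev[of p] D0[of p] that by simp
    hence "ev (hh e) p = 3 * (\<Prod>q\<in>F-{p}. p - q) ^ 2" using hhD[of p] dDpole[OF that] by simp
    thus ?thesis using E0pole[OF that] E0c[of p] by (simp add: \<beta>_def)
  qed
  obtain \<alpha> where alpha: "\<And>i. i \<le> 4 \<Longrightarrow> c i = \<alpha> * e i + \<beta> * hh e i"
  proof -
    define \<alpha> where "\<alpha> = (if None \<in> P then c 3 - \<beta> * hh e 3 else c 4 - \<beta> * hh e 4)"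
    define x where "x = (\<lambda>i. c i - \<alpha> * e i - \<beta> * hh e i)"
    have x_top: "x 4 = 0 \<and> (None \<in> P \<longrightarrow> x 3 = 0)"
    proof (cases "None \<in> P")
      case True
      hence "c 4 = -k" using c4L L(2) by simp
      thus ?thesis using True e_top by (simp add: x_def \<alpha>_def hh_def \<beta>_def)
    next
      case False
      thus ?thesis using e_top by (simp add: x_def \<alpha>_def)
    qed
    define r where "r = [:x 0, x 1, x 2, x 3:]"
    have r_ev: "poly r z = ev x z" for z
      using x_top by (simp add: r_def ev_def algebra_simps power2_eq_square power3_eq_cube power4_eq_xxxx)
    have r_root: "poly r p = poly 0 p" if "p \<in> F" for p
    proof -
      have "ev x p = ev c p - \<alpha> * ev e p - \<beta> * ev (hh e) p"
        by (simp add: ev_def x_def algebra_simps)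
      also have "\<dots> = 0" using interp[OF that] Dev[of p] D0[of p] that by simp
      finally show ?thesis using r_ev by simp
    qed
    have "degree r < card F"
    proof (cases "None \<in> P")
      case True
      hence "r = [:x 0, x 1, x 2:]" using x_top by (simp add: r_def)
      hence "degree r \<le> 2" by simp
      thus ?thesis using cardF3 by simp
    next
      case False
      have "degree r \<le> 3" by (simp add: r_def)
      thus ?thesis using False cardF by simp
    qed
    hence "r = 0" using poly_eqI_degree[of F r 0, OF r_root] cardF3 by simp
    hence "x 0 = 0 \<and> x 1 = 0 \<and> x 2 = 0 \<and> x 3 = 0" by (simp add: r_def)
    hence xz: "x i = 0" if "i \<le> 4" for i using x_top that by (auto simp: le_Suc_eq eval_nat_numeral)
    have "c i = \<alpha> * e i + \<beta> * hh e i" if "i \<le> 4" for i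
      using xz[OF that] unfolding x_def by (simp add: algebra_simps)
    thus ?thesis by (rule that)
  qed
  define q where "q = (\<lambda>i. \<alpha> * e i + \<beta> * hh e i)"
  have evq: "ev c z = ev q z" for z using alpha by (simp add: ev_def q_def)
  have q4: "None \<in> P \<Longrightarrow> q 4 = -k" using alpha[of 4] c4L L(2) by (simp add: q_def)

  have ordP: "qd_order f x = -2" if "x \<in> P" for x
    using assms(3) that by (auto simp: qd_double_pole_residue_def)
  have zfin: "qd_order f (Some z) = int m"
    if z: "z \<notin> F" and Rp: "\<And>t. ev q (z + t) = t^m * Rp t" "Rp holomorphic_on UNIV" "Rp 0 \<noteq> 0" for z m Rp
  proof -
    obtain \<delta> where \<delta>: "\<delta> > 0" "\<forall>x\<in>F. x \<noteq> z \<longrightarrow> \<delta> \<le> dist z x"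
      using finite_set_avoid[OF finF] by blast
    have "zorder (\<lambda>t. f (z + t)) 0 = int m"
    proof (rule zorder_helper[of _ m Rp "\<lambda>t. D (z + t)" \<delta>])
      have "eventually (\<lambda>t. f (t + z) = ev c (t + z) / D (t + z) ^ 2) (at 0)"
        using feq[of z] unfolding at_to_0[of z] eventually_filtermap .
      thus "eventually (\<lambda>t. f (z + t) = t^m * Rp t / D (z + t) ^ 2) (at 0)"
      proof eventually_elim
        case (elim t)
        have "ev q (t + z) = t^m * Rp t" using Rp(1)[of t] by (simp add: add.commute)
        thus ?case using elim by (simp add: add.commute evq)
      qed
      show "Rp holomorphic_on ball 0 \<delta>" using Rp(2) by (rule holomorphic_on_subset) auto
      show "(\<lambda>t. D (z + t)) holomorphic_on ball 0 \<delta>" unfolding D_def by (intro holomorphic_intros)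
      show "0 < \<delta>" by fact
      show "\<forall>t\<in>ball 0 \<delta>. D (z + t) \<noteq> 0"
      proof
        fix t :: complex assume "t \<in> ball 0 \<delta>"
        hence "dist z (z + t) < \<delta>" by (simp add: dist_norm)
        hence "z + t \<notin> F" using \<delta> z by force
        thus "D (z + t) \<noteq> 0" using D0 by simp
      qed
      show "Rp 0 \<noteq> 0" by fact
    qed
    thus ?thesis by (simp add: qd_order_def qd_local_def)
  qed
  define revq where "revq = (\<lambda>t. q 4 + q 3 * t + q 2 * t^2 + q 1 * t^3 + q 0 * t^4)"
  have zinf: "qd_order f None = int m"
    if NP: "None \<notin> P" and Rp: "\<And>t. revq t = t^m * Rp t" "Rp holomorphic_on UNIV" "Rp 0 \<noteq> 0" for m Rp
  proof -
    define \<rho> where "\<rho> = 1 / (1 + (\<Sum>p\<in>F. norm p))"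
    have s0: "0 \<le> (\<Sum>p\<in>F. norm p)" by (simp add: sum_nonneg)
    have \<rho>0: "\<rho> > 0" using s0 by (simp add: \<rho>_def)
    have c4: "card F = 4" using cardF NP by simp
    have "zorder (\<lambda>t. f (1 / t) / t ^ 4) 0 = int m"
    proof (rule zorder_helper[of _ m Rp "\<lambda>t. \<Prod>p\<in>F. 1 - p * t" \<rho>])
      show "eventually (\<lambda>t. f (1 / t) / t ^ 4 = t^m * Rp t / (\<Prod>p\<in>F. 1 - p * t) ^ 2) (at 0)"
        unfolding eventually_at
      proof (intro exI[of _ "1 / (R2 + 1)"] conjI ballI impI)
        have R2pos: "R2 > 0" using R(1) s0 by (simp add: R2_def)
        show "0 < 1 / (R2 + 1)" using R2pos by simp
        fix t :: complex assume t: "t \<noteq> 0 \<and> dist t 0 < 1 / (R2 + 1)"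
        hence t0: "t \<noteq> 0" and "norm t < 1 / (R2 + 1)" by auto
        hence "norm t * (R2 + 1) < 1" using R2pos by (simp add: field_simps)
        moreover have "norm t * (R2 + 1) = R2 * norm t + norm t" by (simp add: algebra_simps)
        ultimately have "R2 * norm t < 1" using norm_ge_zero[of t] by linarith
        hence "R2 < norm (1 / t)" using t0 R2pos by (simp add: norm_divide field_simps)
        hence fe: "f (1 / t) = ev c (1 / t) / D (1 / t) ^ 2" by (rule feqinf)
        have Dt: "D (1 / t) * t ^ 4 = (\<Prod>p\<in>F. 1 - p * t)" using Dinv[OF t0] c4 by simp
        have rv: "ev c (1 / t) * t ^ 4 = revq t" unfolding evq using t0
          by (simp add: ev_def revq_def field_simps power2_eq_square power3_eq_cube power4_eq_xxxx)
        have "D (1 / t) \<noteq> 0" using bigNF[OF \<open>R2 < norm (1 / t)\<close>] D0 by simp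
        show "f (1 / t) / t ^ 4 = t^m * Rp t / (\<Prod>p\<in>F. 1 - p * t) ^ 2"
          unfolding fe Dt[symmetric] Rp(1)[symmetric] rv[symmetric] using t0 \<open>D (1 / t) \<noteq> 0\<close>
          by (simp add: field_simps power2_eq_square power4_eq_xxxx)
      qed
      show "Rp holomorphic_on ball 0 \<rho>" using Rp(2) by (rule holomorphic_on_subset) auto
      show "(\<lambda>t. \<Prod>p\<in>F. 1 - p * t) holomorphic_on ball 0 \<rho>" by (intro holomorphic_intros)
      show "0 < \<rho>" by fact
      show "\<forall>t\<in>ball 0 \<rho>. (\<Prod>p\<in>F. 1 - p * t) \<noteq> 0"
      proof
        fix t :: complex assume "t \<in> ball 0 \<rho>"
        hence tr: "norm t < \<rho>" by simp
        show "(\<Prod>p\<in>F. 1 - p * t) \<noteq> 0"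
        proof
          assume "(\<Prod>p\<in>F. 1 - p * t) = 0"
          then obtain p where p: "p \<in> F" "1 - p * t = 0" using finF by auto
          have "norm p \<le> (\<Sum>p\<in>F. norm p)" using finF p(1) by (intro member_le_sum) auto
          hence "norm p * norm t \<le> (\<Sum>p\<in>F. norm p) * \<rho>" using tr \<rho>0 s0
            by (intro mult_mono) auto
          also have "\<dots> < 1" using s0 by (simp add: \<rho>_def field_simps)
          finally have "norm (p * t) < 1" by (simp add: norm_mult)
          moreover have "p * t = 1" using p(2) by simp
          ultimately show False by simp
        qed
      qed
      show "Rp 0 \<noteq> 0" by fact
    qed
    thus ?thesis by (simp add: qd_order_def qd_local_def)
  qed

  have qnzF: "ev q p \<noteq> 0" if "p \<in> F" for p
  proof -
    have "(\<Prod>q\<in>F-{p}. p - q) \<noteq> 0" using finF by auto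
    thus ?thesis using E0pole[OF that] E0c[of p] evq[of p] k0 by simp
  qed
  have tayq: "tay q z i = \<alpha> * tay e z i + \<beta> * hh (tay e z) i" for z i
    unfolding q_def tay_lin hh_tay ..
  have AL1: "tay q z 2 \<noteq> 0 \<and> tay q z 3 ^ 2 = 4 * tay q z 4 * tay q z 2"
    if z: "z \<notin> F" and h0: "tay q z 0 = 0" and h1: "tay q z 1 = 0" for z
  proof -
    define e' where "e' = tay e z"
    have e0: "e' 0 \<noteq> 0" using Dev[of z] D0[of z] z by (simp add: e'_def tay_def)
    have qi: "\<And>i. tay q z i = \<alpha> * e' i + \<beta> * hh e' i" using tayq by (simp add: e'_def)
    have sq: "tay q z 3 ^ 2 = 4 * tay q z 4 * tay q z 2" by (rule core1[OF e0 qi h0 h1])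
    moreover have "tay q z 2 \<noteq> 0"
    proof
      assume h2: "tay q z 2 = 0"
      define Sp where "Sp = [:8 * e' 0^2, 4 * e' 0 * e' 1, 4 * e' 0 * e' 2 - e' 1^2:]"
      have Spe: "64 * e' 0^3 * ev e' t = (poly Sp t)^2" for t
        using core2[OF e0 b0 qi h0 h1 h2, of t] by (simp add: Sp_def algebra_simps power2_eq_square)
      have Sp0: "Sp \<noteq> 0" using e0 by (simp add: Sp_def)
      have sub: "(\<lambda>p. p - z) ` F \<subseteq> {t. poly Sp t = 0}"
      proof
        fix t assume "t \<in> (\<lambda>p. p - z) ` F"
        then obtain p where p: "p \<in> F" "t = p - z" by auto
        have "ev e' t = ev e p" using ev_tay[of e z t] p by (simp add: e'_def)
        also have "\<dots> = 0" using Dev[of p] D0[of p] p by simp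
        finally show "t \<in> {t. poly Sp t = 0}" using Spe[of t] by simp
      qed
      have "card ((\<lambda>p. p - z) ` F) \<le> card {t. poly Sp t = 0}"
        by (rule card_mono[OF poly_roots_finite[OF Sp0] sub])
      also have "\<dots> \<le> degree Sp" by (rule card_poly_roots_bound[OF Sp0])
      also have "degree Sp \<le> 2" by (simp add: Sp_def)
      finally have "card ((\<lambda>p. p - z) ` F) \<le> 2" .
      moreover have "card ((\<lambda>p. p - z) ` F) = card F" by (rule card_image) (auto simp: inj_on_def)
      ultimately show False using cardF3 by simp
    qed
    ultimately show ?thesis by simp
  qed
  have AL2: "q 2 \<noteq> 0 \<and> q 1 ^ 2 = 4 * q 0 * q 2"
    if NP: "None \<notin> P" and h4: "q 4 = 0" and h3: "q 3 = 0"
  proof -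
    have e4: "e 4 \<noteq> 0" using e_top NP by simp
    have qi: "\<And>i. q i = \<alpha> * e i + \<beta> * hh e i" by (simp add: q_def)
    have sq: "q 1 ^ 2 = 4 * q 0 * q 2" by (rule core1r[OF e4 qi h4 h3])
    moreover have "q 2 \<noteq> 0"
    proof
      assume h2: "q 2 = 0"
      define Sp where "Sp = [:4 * e 4 * e 2 - e 3^2, 4 * e 4 * e 3, 8 * e 4^2:]"
      have Spe: "64 * e 4^3 * ev e t = (poly Sp t)^2" for t
        using core2r[OF e4 b0 qi h4 h3 h2, of t] by (simp add: Sp_def algebra_simps power2_eq_square)
      have Sp0: "Sp \<noteq> 0" using e4 by (simp add: Sp_def)
      have sub: "F \<subseteq> {t. poly Sp t = 0}"
      proof
        fix p assume p: "p \<in> F"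
        have "ev e p = 0" using Dev[of p] D0[of p] p by simp
        thus "p \<in> {t. poly Sp t = 0}" using Spe[of p] e4 by simp
      qed
      have "card F \<le> card {t. poly Sp t = 0}"
        by (rule card_mono[OF poly_roots_finite[OF Sp0] sub])
      also have "\<dots> \<le> degree Sp" by (rule card_poly_roots_bound[OF Sp0])
      also have "degree Sp \<le> 2" by (simp add: Sp_def)
      finally show False using cardF3 by simp
    qed
    ultimately show ?thesis by simp
  qed
  have ord0: "qd_order f (Some z) = 0" if "z \<notin> F" "ev q z \<noteq> 0" for z
  proof -
    have "qd_order f (Some z) = int 0"
    proof (rule zfin[OF that(1)])
      show "ev q (z + t) = t^0 * ev q (z + t)" for t by simp
      show "(\<lambda>t. ev q (z + t)) holomorphic_on UNIV" unfolding ev_def by (intro holomorphic_intros)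
      show "ev q (z + 0) \<noteq> 0" using that(2) by simp
    qed
    thus ?thesis by simp
  qed
  have ordI0: "qd_order f None = 0" if "None \<notin> P" "q 4 \<noteq> 0"
  proof -
    have "qd_order f None = int 0"
    proof (rule zinf[OF that(1)])
      show "revq t = t^0 * revq t" for t by simp
      show "revq holomorphic_on UNIV" unfolding revq_def by (intro holomorphic_intros)
      show "revq 0 \<noteq> 0" using that(2) by (simp add: revq_def)
    qed
    thus ?thesis by simp
  qed
  have qzero_notF: "z \<notin> F" if "ev q z = 0" for z using qnzF that by blast
  have Zsub: "qd_zeros f \<subseteq> Some ` {z. ev q z = 0} \<union> (if None \<notin> P \<and> q 4 = 0 then {None} else {})"
  proof
    fix x assume x: "x \<in> qd_zeros f"
    hence xo: "qd_order f x > 0" by (simp add: qd_zeros_def)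
    show "x \<in> Some ` {z. ev q z = 0} \<union> (if None \<notin> P \<and> q 4 = 0 then {None} else {})"
    proof (cases x)
      case None
      hence "None \<notin> P" using ordP xo by force
      moreover have "q 4 = 0" using ordI0 \<open>None \<notin> P\<close> xo None by force
      ultimately show ?thesis using None by simp
    next
      case (Some z)
      hence "z \<notin> F" using ordP xo by (force simp: F_def)
      hence "ev q z = 0" using ord0 xo Some by force
      thus ?thesis using Some by simp
    qed
  qed

  have ordfin: "qd_order f (Some z) = int m" if z: "z \<notin> F" and Rp: "\<And>t. ev q (z + t) = t^m * Rp t"
    and hol: "Rp holomorphic_on UNIV" and R0: "Rp 0 \<noteq> 0" for z m Rp
    by (rule zfin[OF z Rp hol R0])
  show ?thesis
  proof (cases "\<exists>r. r \<notin> F \<and> tay q r 0 = 0 \<and> tay q r 1 = 0")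
    case True
    then obtain r where r: "r \<notin> F" "tay q r 0 = 0" "tay q r 1 = 0" by blast
    define T where "T = tay q r"
    have T2: "T 2 \<noteq> 0" and T3: "T 3 ^ 2 = 4 * T 4 * T 2" using AL1[OF r] by (simp_all add: T_def)
    have T0: "T 0 = 0" "T 1 = 0" using r by (simp_all add: T_def)
    define \<sigma> where "\<sigma> = T 3 / (2 * T 2)"
    have T3s: "T 3 = 2 * \<sigma> * T 2" using T2 by (simp add: \<sigma>_def)
    have T4s: "T 4 = \<sigma>^2 * T 2"
    proof -
      have "4 * T 4 * T 2 = T 3 ^ 2" using T3 by simp
      also have "\<dots> = 4 * (\<sigma>^2 * T 2) * T 2" unfolding T3s by (simp add: power2_eq_square algebra_simps)
      finally have "4 * T 4 * T 2 = 4 * (\<sigma>^2 * T 2) * T 2" .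
      thus ?thesis using T2 by simp
    qed
    have evr: "ev q (r + u) = u^2 * (T 2 * (1 + \<sigma> * u)^2)" for u
    proof -
      have "ev q (r + u) = ev T u" by (simp add: T_def ev_tay)
      also have "\<dots> = u^2 * (T 2 * (1 + \<sigma> * u)^2)"
        unfolding ev_def T0 T3s T4s by (simp add: algebra_simps power2_eq_square power3_eq_cube power4_eq_xxxx)
      finally show ?thesis .
    qed
    have ordr: "qd_order f (Some r) = 2"
      using ordfin[OF r(1) evr] T2 by (simp add: holomorphic_intros)
    have q4T: "q 4 = \<sigma>^2 * T 2" using T4s by (simp add: T_def tay_def)
    show ?thesis
    proof (cases "\<sigma> = 0")
      case False
      define s where "s = r - 1 / \<sigma>"
      have evs: "ev q (s + u) = u^2 * (T 2 * \<sigma>^2 * (u - 1 / \<sigma>)^2)" for u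
      proof -
        have "ev q (s + u) = ev q (r + (u - 1 / \<sigma>))" by (simp add: s_def algebra_simps)
        also have "\<dots> = (u - 1 / \<sigma>)^2 * (T 2 * (1 + \<sigma> * (u - 1 / \<sigma>))^2)" by (rule evr)
        also have "\<dots> = u^2 * (T 2 * \<sigma>^2 * (u - 1 / \<sigma>)^2)"
          using False by (simp add: field_simps power2_eq_square)
        finally show ?thesis .
      qed
      have sF: "s \<notin> F" using evs[of 0] qzero_notF[of s] by simp
      have ords: "qd_order f (Some s) = 2"
        using ordfin[OF sF evs] T2 False by (simp add: holomorphic_intros)
      have rs: "r \<noteq> s" using False by (simp add: s_def)
      have zero_iff: "ev q z = 0 \<longleftrightarrow> z = r \<or> z = s" for z
      proof -
        have "ev q z = (z - r)^2 * (T 2 * (1 + \<sigma> * (z - r))^2)" using evr[of "z - r"] by simp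
        moreover have "1 + \<sigma> * (z - r) = 0 \<longleftrightarrow> z = s" using False
          by (auto simp: s_def field_simps)
        ultimately show ?thesis using T2 by auto
      qed
      have q4nz: "q 4 \<noteq> 0" using q4T False T2 by simp
      have Z: "qd_zeros f = {Some r, Some s}"
      proof
        show "qd_zeros f \<subseteq> {Some r, Some s}" using Zsub q4nz zero_iff by auto
        show "{Some r, Some s} \<subseteq> qd_zeros f" using ordr ords by (simp add: qd_zeros_def)
      qed
      show ?thesis using Z rs ordr ords by auto
    next
      case True
      have q4z: "q 4 = 0" using q4T True by simp
      have NP: "None \<notin> P" using q4z q4 k0 by auto
      have q3z: "q 3 = 0" using T3s True q4z by (simp add: T_def tay_def)
      have q2: "q 2 = T 2" using q3z q4z by (simp add: T_def tay_def)
      have ordN: "qd_order f None = 2"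
      proof -
        have "qd_order f None = int 2"
        proof (rule zinf[OF NP])
          show "revq t = t^2 * (q 2 + q 1 * t + q 0 * t^2)" for t
            using q3z q4z by (simp add: revq_def algebra_simps power2_eq_square power3_eq_cube power4_eq_xxxx)
          show "(\<lambda>t. q 2 + q 1 * t + q 0 * t^2) holomorphic_on UNIV" by (intro holomorphic_intros)
          show "q 2 + q 1 * 0 + q 0 * 0^2 \<noteq> 0" using q2 T2 by simp
        qed
        thus ?thesis by simp
      qed
      have zero_iff: "ev q z = 0 \<longleftrightarrow> z = r" for z
      proof -
        have "ev q z = (z - r)^2 * (T 2 * (1 + \<sigma> * (z - r))^2)" using evr[of "z - r"] by simp
        thus ?thesis using T2 True by simp
      qed
      have Z: "qd_zeros f = {Some r, None}"
      proof
        show "qd_zeros f \<subseteq> {Some r, None}" using Zsub zero_iff by (auto split: if_splits)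
        show "{Some r, None} \<subseteq> qd_zeros f" using ordr ordN by (simp add: qd_zeros_def)
      qed
      show ?thesis using Z ordr ordN by auto
    qed
  next
    case False
    hence nodouble: "tay q r 1 \<noteq> 0" if "r \<notin> F" "tay q r 0 = 0" for r using that by blast
    have not34: "None \<in> P \<or> q 4 \<noteq> 0 \<or> q 3 \<noteq> 0"
    proof (rule ccontr)
      assume "\<not> (None \<in> P \<or> q 4 \<noteq> 0 \<or> q 3 \<noteq> 0)"
      hence NP: "None \<notin> P" and h4: "q 4 = 0" and h3: "q 3 = 0" by auto
      from AL2[OF NP h4 h3] have q2: "q 2 \<noteq> 0" and q1: "q 1 ^ 2 = 4 * q 0 * q 2" by auto
      define r where "r = - q 1 / (2 * q 2)"
      have t0: "tay q r 0 = 0"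
      proof -
        have "tay q r 0 = q 0 + q 1 * r + q 2 * r^2" using h3 h4 by (simp add: tay_def ev_def)
        also have "\<dots> = (4 * q 0 * q 2 - q 1 ^ 2) / (4 * q 2)"
          using q2 by (simp add: r_def field_simps power2_eq_square)
        also have "\<dots> = 0" using q1 by simp
        finally show ?thesis .
      qed
      have t1: "tay q r 1 = 0" using h3 h4 q2 by (simp add: tay_def r_def field_simps)
      have "r \<notin> F" using qzero_notF[of r] t0 by (simp add: tay_def)
      thus False using nodouble t0 t1 by blast
    qed
    define ZF where "ZF = {z. ev q z = 0}"
    define ZI where "ZI = (if None \<notin> P \<and> q 4 = 0 then {None} else ({} :: complex option set))"
    have ord1: "qd_order f (Some z) = 1" if "z \<in> ZF" for z
    proof -
      have z0: "ev q z = 0" using that by (simp add: ZF_def)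
      hence zF: "z \<notin> F" by (rule qzero_notF)
      define T where "T = tay q z"
      have T0: "T 0 = 0" using z0 by (simp add: T_def tay_def)
      have T1: "T 1 \<noteq> 0" using nodouble[OF zF] T0 by (simp add: T_def)
      have "qd_order f (Some z) = int 1"
      proof (rule ordfin[OF zF])
        show "ev q (z + t) = t^1 * (T 1 + T 2 * t + T 3 * t^2 + T 4 * t^3)" for t
        proof -
          have "ev q (z + t) = ev T t" by (simp add: T_def ev_tay)
          also have "\<dots> = t^1 * (T 1 + T 2 * t + T 3 * t^2 + T 4 * t^3)"
            unfolding ev_def T0 by (simp add: algebra_simps power2_eq_square power3_eq_cube power4_eq_xxxx)
          finally show ?thesis .
        qed
        show "(\<lambda>t. T 1 + T 2 * t + T 3 * t^2 + T 4 * t^3) holomorphic_on UNIV" by (intro holomorphic_intros)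
        show "T 1 + T 2 * 0 + T 3 * 0^2 + T 4 * 0^3 \<noteq> 0" using T1 by simp
      qed
      thus ?thesis by simp
    qed
    have ordN1: "qd_order f None = 1" if "None \<notin> P" "q 4 = 0"
    proof -
      have q3: "q 3 \<noteq> 0" using not34 that by auto
      have "qd_order f None = int 1"
      proof (rule zinf[OF that(1)])
        show "revq t = t^1 * (q 3 + q 2 * t + q 1 * t^2 + q 0 * t^3)" for t
          using that(2) by (simp add: revq_def algebra_simps power2_eq_square power3_eq_cube power4_eq_xxxx)
        show "(\<lambda>t. q 3 + q 2 * t + q 1 * t^2 + q 0 * t^3) holomorphic_on UNIV" by (intro holomorphic_intros)
        show "q 3 + q 2 * 0 + q 1 * 0^2 + q 0 * 0^3 \<noteq> 0" using q3 by simp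
      qed
      thus ?thesis by simp
    qed
    have Z: "qd_zeros f = Some ` ZF \<union> ZI"
    proof
      show "qd_zeros f \<subseteq> Some ` ZF \<union> ZI" using Zsub by (simp add: ZF_def ZI_def)
      show "Some ` ZF \<union> ZI \<subseteq> qd_zeros f"
        using ord1 ordN1 by (auto simp: qd_zeros_def ZI_def split: if_splits)
    qed
    have allone: "\<forall>x\<in>qd_zeros f. qd_order f x = 1"
      using ord1 ordN1 by (auto simp: Z ZI_def split: if_splits)
    define pq where "pq = [:q 0, q 1, q 2, q 3, q 4:]"
    have pq_ev: "poly pq z = ev q z" for z
      by (simp add: pq_def ev_def algebra_simps power2_eq_square power3_eq_cube power4_eq_xxxx)
    have pq_d: "poly (pderiv pq) z = tay q z 1" for z
      by (simp add: pq_def tay_def pderiv_pCons algebra_simps power2_eq_square power3_eq_cube)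
    have pq0: "pq \<noteq> 0" using not34 q4 k0 by (auto simp: pq_def)
    have rsf: "rsquarefree pq"
      unfolding rsquarefree_roots
    proof (intro allI notI)
      fix a assume "poly pq a = 0 \<and> poly (pderiv pq) a = 0"
      hence "ev q a = 0" "tay q a 1 = 0" by (simp_all add: pq_ev pq_d)
      moreover from this(1) have "a \<notin> F" by (rule qzero_notF)
      ultimately show False using nodouble by (simp add: tay_def)
    qed
    have ZFeq: "ZF = {z. poly pq z = 0}" by (simp add: ZF_def pq_ev)
    have finZF: "finite ZF" unfolding ZFeq by (rule poly_roots_finite[OF pq0])
    have cardZF: "card ZF = degree pq"
    proof -
      have lc: "lead_coeff pq \<noteq> 0" using pq0 by simp
      have "degree pq = degree (smult (lead_coeff pq) (\<Prod>z|poly pq z = 0. [:-z, 1:]))"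
        using complex_poly_decompose_rsquarefree[OF rsf] by simp
      also have "\<dots> = degree (\<Prod>z|poly pq z = 0. [:-z, 1:])" using lc by simp
      also have "\<dots> = (\<Sum>z|poly pq z = 0. degree [:-z, 1::complex:])"
        by (rule degree_prod_eq_sum_degree) simp
      also have "\<dots> = card ZF" by (simp add: ZFeq)
      finally show ?thesis by simp
    qed
    have cZ: "card (qd_zeros f) = card ZF + card ZI"
    proof -
      have "card (Some ` ZF \<union> ZI) = card (Some ` ZF) + card ZI"
        by (rule card_Un_disjoint) (use finZF in \<open>auto simp: ZI_def\<close>)
      thus ?thesis by (simp add: Z card_image)
    qed
    have "card (qd_zeros f) = 4"
    proof (cases "q 4 = 0")
      case True
      hence NP: "None \<notin> P" using q4 k0 by auto
      have q3: "q 3 \<noteq> 0" using not34 True NP by auto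
      have "degree pq = 3" using True q3 by (simp add: pq_def)
      thus ?thesis using cZ cardZF True NP by (simp add: ZI_def)
    next
      case False
      have "degree pq = 4" using False by (simp add: pq_def)
      thus ?thesis using cZ cardZF False by (simp add: ZI_def)
    qed
    thus ?thesis using allone by simp
  qed
qed
end
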